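(* For every positive integer $n$ there exists an addition chain producing $2^n-1$ whose length $\delta(2^n-1)$ satisfies $$\delta(2^n-1)\leq 2n-1-2\left\lfloor \frac{n-1}{2^{\lfloor \frac{\log n}{\log 2}\rfloor}}\right\rfloor+\left\lfloor \frac{\log n}{\log 2}\right\rfloor.$$
   Context: An addition chain producing $N$ is a sequence $1,2,s_3,\ldots,s_k=N$ (or just $1$ for $N=1$) in which every term after the first is the sum of two (not necessarily distinct) earlier terms; its length is the number of terms excluding the initial $1$. $\lfloor\cdot\rfloor$ is the floor function and $\log$ the natural logarithm. *)

theory Defs
  imports Complex_Main
begin

definition addition_chain :: "nat list \<Rightarrow> nat \<Rightarrow> bool" where
  "addition_chain xs N \<longleftrightarrow>
     xs \<noteq> [] \<and> hd xs = 1 \<and> last xs = N \<and>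
     (\<forall>k. 0 < k \<and> k < length xs \<longrightarrow>
        (\<exists>i j. i < k \<and> j < k \<and> xs ! k = xs ! i + xs ! j))"

definition chain_length :: "nat list \<Rightarrow> nat" where
  "chain_length xs = length xs - 1"

end

theory Submission
  imports Defs
begin

lemma chain_ext:
  assumes "addition_chain xs N"
  shows "addition_chain (xs @ [N+N, N+N+1]) (N+N+1)"
  unfolding addition_chain_def
proof (intro conjI allI impI)
  have ne: "xs \<noteq> []" and h: "hd xs = 1" and l: "last xs = N"
   and st: "\<forall>k. 0 < k \<and> k < length xs \<longrightarrow> (\<exists>i j. i < k \<and> j < k \<and> xs ! k = xs ! i + xs ! j)"
    using assms unfolding addition_chain_def by auto
  show "xs @ [N + N, N + N + 1] \<noteq> []" by simp
  show "hd (xs @ [N + N, N + N + 1]) = 1" using ne h by simp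
  show "last (xs @ [N + N, N + N + 1]) = N + N + 1" by simp
  fix k assume k: "0 < k \<and> k < length (xs @ [N + N, N + N + 1])"
  define L where "L = length xs"
  have L0: "L > 0" using ne L_def by simp
  have lastL: "xs ! (L - 1) = N" using ne l L_def by (simp add: last_conv_nth)
  have x0: "xs ! 0 = 1" using ne h by (simp add: hd_conv_nth)
  have "k < L \<or> k = L \<or> k = L + 1" using k L_def by auto
  then show "\<exists>i j. i < k \<and> j < k \<and> (xs @ [N + N, N + N + 1]) ! k = (xs @ [N + N, N + N + 1]) ! i + (xs @ [N + N, N + N + 1]) ! j"
  proof (elim disjE)
    assume "k < L"
    then obtain i j where "i < k" "j < k" "xs ! k = xs ! i + xs ! j" using st k L_def by blast
    then show ?thesis using \<open>k < L\<close> L_def by (intro exI[of _ i] exI[of _ j]) (simp add: nth_append)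
  next
    assume "k = L"
    then show ?thesis using L0 lastL L_def
      by (intro exI[of _ "L - 1"] exI[of _ "L - 1"]) (simp add: nth_append)
  next
    assume "k = L + 1"
    then show ?thesis using L0 x0 L_def
      by (intro exI[of _ "L"] exI[of _ 0]) (simp add: nth_append)
  qed
qed

fun ch :: "nat \<Rightarrow> nat list" where
  "ch 0 = [1]"
| "ch (Suc k) = ch k @ [2*(2^(k+1)-1), 2^(k+2)-1]"

lemma ch_ok: "addition_chain (ch k) (2^(k+1) - 1) \<and> length (ch k) = 2*k+1"
proof (induction k)
  case 0
  then show ?case by (auto simp: addition_chain_def)
next
  case (Suc k)
  have p: "(1::nat) \<le> 2^(k+1)" by simp
  have q: "(1::nat) \<le> 2^k" by simp
  have e2: "(2^(k+2)-1) = (2^(k+1)-1) + (2^(k+1)-1) + (1::nat)" using q by (simp, linarith)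
  have e1: "2*(2^(k+1)-1) = (2^(k+1)-1) + (2^(k+1)-1::nat)" by simp
  show ?case using chain_ext[OF Suc.IH[THEN conjunct1]] Suc.IH
    by (simp only: ch.simps e1 e2 [symmetric]) (simp add: e2[symmetric])
qed

theorem mainTheorem10:
  fixes n :: nat
  assumes "n \<ge> 1"
  shows "\<exists>c. addition_chain c (2 ^ n - 1) \<and>
    real (chain_length c) \<le>
      2 * real n - 1
      - 2 * of_int \<lfloor>(real n - 1) / 2 powr of_int \<lfloor>ln (real n) / ln 2\<rfloor>\<rfloor>
      + of_int \<lfloor>ln (real n) / ln 2\<rfloor>"
proof -
  define m where "m = \<lfloor>ln (real n) / ln 2\<rfloor>"
  define F where "F = \<lfloor>(real n - 1) / 2 powr of_int m\<rfloor>"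
  have c: "addition_chain (ch (n-1)) (2 ^ n - 1)" "chain_length (ch (n-1)) = 2*(n-1)"
    using ch_ok[of "n-1"] assms by (auto simp: chain_length_def)
  have lg: "ln (real n) / ln 2 = log 2 (real n)" by (simp add: log_def)
  have m0: "m \<ge> 0" using assms unfolding m_def lg by simp
  have mlt: "log 2 (real n) < m + 1" unfolding m_def lg by linarith
  have "real n = 2 powr log 2 (real n)" using assms by simp
  also have "\<dots> < 2 powr (m+1)" using mlt by simp
  finally have nlt: "real n < 2 powr (m+1)" .
  have "2 powr (m+1) = 2 * 2 powr m" by (simp add: powr_add)
  with nlt have "(real n - 1) / 2 powr m < 2" by (simp add: field_simps)
  hence F1: "F \<le> 1" unfolding F_def by linarith
  have F0: "n = 1 \<Longrightarrow> F = 0" unfolding F_def by simp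
  have m1: "n \<ge> 2 \<Longrightarrow> m \<ge> 1" unfolding m_def lg
    by (simp add: le_log_iff)
  have "real (chain_length (ch (n-1))) \<le> 2 * real n - 1 - 2 * of_int F + of_int m"
  proof (cases "n = 1")
    case True then show ?thesis using c F0 m0 by simp
  next
    case False then show ?thesis using c F1 m1 assms by (simp add: of_nat_diff)
  qed
  then show ?thesis using c unfolding F_def m_def by blast
qed

end
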